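(* Let $q\ge 2$ and $n\ge 1$ be integers, $N=\{1,\dots,n\}$, $F^c=\{-\tfrac{q-1}{2},-\tfrac{q-3}{2},\dots,\tfrac{q-3}{2},\tfrac{q-1}{2}\}$ and $\Omega=(F^c)^N$. For each subset $A\subset N$ with $|A|\ge 2$ let $J_A\ge 0$ be given, and define $H_\gamma=-\sum_{A}J_A\,\delta_{(\sigma^A)_\gamma}$, where for $A=\{i_1,\dots,i_k\}$, $\delta_{(\sigma^A)_\gamma}=1$ if $(\sigma_{i_1})_\gamma=\dots=(\sigma_{i_k})_\gamma$ and $0$ otherwise. Let $Z_\gamma=\exp(-H_\gamma)$, $Z=\sum_{\gamma\in\Omega}Z_\gamma$, $P(\gamma)=Z_\gamma/Z$, and $\langle X\rangle=\sum_\gamma X(\gamma)P(\gamma)$. For a finite list $R$ of elements of $N$ (repetitions allowed) set $\sigma^R=\prod_{i\in R}\sigma_i$ (product with multiplicity, $\sigma^\emptyset\equiv 1$), where $\sigma_i(\gamma)=(\sigma_i)_\gamma$ is the $i$-th coordinate of $\gamma$. Then for any two such lists $R$ and $S$, $$\langle\sigma^R\sigma^S\rangle-\langle\sigma^R\rangle\langle\sigma^S\rangle\ge 0.$$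
   Context: This is a generalized ferromagnetic $q$-state Potts model with multi-spin interactions, with spin values taken in the centered set $F^c$ (equivalently, $\sigma_i$ is the Potts spin in $\{1,\dots,q\}$ minus $(q+1)/2$); the inverse temperature is set to $1$. The paper formally also permits $J_A=+\infty$. *)

theory Defs
  imports Complex_Main "HOL-Library.FuncSet"
begin

definition Fc :: "nat \<Rightarrow> real set" where
  "Fc q = (\<lambda>k. real k - (real q - 1) / 2) ` {0..<q}"

definition Omega :: "nat \<Rightarrow> nat \<Rightarrow> (nat \<Rightarrow> real) set" where
  "Omega q n = PiE {1..n} (\<lambda>_. Fc q)"

definition interactions :: "nat \<Rightarrow> nat set set" where
  "interactions n = {A. A \<subseteq> {1..n} \<and> 2 \<le> card A}"

definition delta :: "nat set \<Rightarrow> (nat \<Rightarrow> real) \<Rightarrow> real" where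
  "delta A \<gamma> = (if \<forall>i\<in>A. \<forall>j\<in>A. \<gamma> i = \<gamma> j then 1 else 0)"

definition Ham :: "nat \<Rightarrow> (nat set \<Rightarrow> real) \<Rightarrow> (nat \<Rightarrow> real) \<Rightarrow> real" where
  "Ham n J \<gamma> = - (\<Sum>A\<in>interactions n. J A * delta A \<gamma>)"

definition Zg :: "nat \<Rightarrow> (nat set \<Rightarrow> real) \<Rightarrow> (nat \<Rightarrow> real) \<Rightarrow> real" where
  "Zg n J \<gamma> = exp (- Ham n J \<gamma>)"

definition Zpart :: "nat \<Rightarrow> nat \<Rightarrow> (nat set \<Rightarrow> real) \<Rightarrow> real" where
  "Zpart q n J = (\<Sum>\<gamma>\<in>Omega q n. Zg n J \<gamma>)"

definition Prob :: "nat \<Rightarrow> nat \<Rightarrow> (nat set \<Rightarrow> real) \<Rightarrow> (nat \<Rightarrow> real) \<Rightarrow> real" where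
  "Prob q n J \<gamma> = Zg n J \<gamma> / Zpart q n J"

definition expect :: "nat \<Rightarrow> nat \<Rightarrow> (nat set \<Rightarrow> real) \<Rightarrow> ((nat \<Rightarrow> real) \<Rightarrow> real) \<Rightarrow> real" where
  "expect q n J X = (\<Sum>\<gamma>\<in>Omega q n. X \<gamma> * Prob q n J \<gamma>)"

definition sigmaR :: "nat list \<Rightarrow> (nat \<Rightarrow> real) \<Rightarrow> real" where
  "sigmaR R \<gamma> = prod_list (map \<gamma> R)"

end

theory Submission
  imports Defs
begin

lemma two_point:
  fixes a0 a1 b0 b1 c0 c1 d0 d1 :: real
  assumes nn: "0 \<le> a0" "0 \<le> a1" "0 \<le> b0" "0 \<le> b1" "0 \<le> c0" "0 \<le> c1" "0 \<le> d0" "0 \<le> d1"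
    and h00: "b0 * c0 \<le> d0 * a0" and h01: "b0 * c1 \<le> d1 * a0"
    and h10: "b1 * c0 \<le> d1 * a0" and h11: "b1 * c1 \<le> d1 * a1"
  shows "(b0 + b1) * (c0 + c1) \<le> (d0 + d1) * (a0 + a1)"
proof (cases "a0 * d1 = 0")
  case True
  have "b0 * c1 = 0" using h01 True nn by (metis mult.commute mult_nonneg_nonneg order_antisym)
  moreover have "b1 * c0 = 0" using h10 True nn by (metis mult.commute mult_nonneg_nonneg order_antisym)
  moreover have "0 \<le> d0 * a1 + d1 * a0" using nn by simp
  moreover have "(b0 + b1) * (c0 + c1) = b0*c0 + b0*c1 + b1*c0 + b1*c1"
    "(d0 + d1) * (a0 + a1) = d0*a0 + d1*a0 + d0*a1 + d1*a1" by (simp_all add: algebra_simps)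
  ultimately show ?thesis using h00 h11 by linarith
next
  case False
  define s where "s = a0 * d1"
  have s0: "s > 0" using False nn unfolding s_def by (simp add: less_le)
  have "(a1 * d0) * s = (d0 * a0) * (d1 * a1)" unfolding s_def by (simp add: algebra_simps)
  also have "(d0 * a0) * (d1 * a1) \<ge> (b0 * c0) * (b1 * c1)"
    by (rule mult_mono[OF h00 h11]) (use nn in simp_all)
  finally have k: "(a1 * d0) * s \<ge> (b0 * c1) * (b1 * c0)" by (simp add: algebra_simps)
  have "(s - b0 * c1) * (s - b1 * c0) \<ge> 0"
    using h01 h10 unfolding s_def by (intro mult_nonneg_nonneg) (auto simp: algebra_simps)
  hence "s * (s + a1 * d0) \<ge> s * (b0 * c1 + b1 * c0)" using k by (simp add: algebra_simps)
  hence "s + a1 * d0 \<ge> b0 * c1 + b1 * c0" using s0 by simp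
  thus ?thesis using h00 h11 unfolding s_def by (simp add: algebra_simps)
qed

lemma sum_Pow_insert:
  assumes "finite E" "e \<notin> E"
  shows "(\<Sum>B\<in>Pow (insert e E). f B) = (\<Sum>B\<in>Pow E. f B + f (insert e B))"
proof -
  have d: "Pow E \<inter> insert e ` Pow E = {}" using assms by auto
  have i: "inj_on (insert e) (Pow E)" using assms unfolding inj_on_def by (metis Diff_insert_absorb PowD subsetD)
  have "(\<Sum>B\<in>Pow (insert e E). f B) = (\<Sum>B\<in>Pow E. f B) + (\<Sum>B\<in>insert e ` Pow E. f B)"
    unfolding Pow_insert by (rule sum.union_disjoint) (use assms d in auto)
  also have "(\<Sum>B\<in>insert e ` Pow E. f B) = (\<Sum>B\<in>Pow E. f (insert e B))"
    using sum.reindex[OF i] by simp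
  finally show ?thesis by (simp add: sum.distrib)
qed

lemma four_functions:
  fixes \<alpha> \<beta> \<gamma> \<delta> :: "'a set \<Rightarrow> real"
  assumes "finite E"
    and "\<And>B. B \<subseteq> E \<Longrightarrow> 0 \<le> \<alpha> B \<and> 0 \<le> \<beta> B \<and> 0 \<le> \<gamma> B \<and> 0 \<le> \<delta> B"
    and "\<And>B B'. B \<subseteq> E \<Longrightarrow> B' \<subseteq> E \<Longrightarrow> \<alpha> B * \<beta> B' \<le> \<gamma> (B \<union> B') * \<delta> (B \<inter> B')"
  shows "(\<Sum>B\<in>Pow E. \<alpha> B) * (\<Sum>B\<in>Pow E. \<beta> B) \<le> (\<Sum>B\<in>Pow E. \<gamma> B) * (\<Sum>B\<in>Pow E. \<delta> B)"
  using assms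
proof (induction E arbitrary: \<alpha> \<beta> \<gamma> \<delta> rule: finite_induct)
  case empty
  then show ?case by simp
next
  case (insert e E)
  let ?a = "\<lambda>B. \<alpha> B + \<alpha> (insert e B)"
  let ?b = "\<lambda>B. \<beta> B + \<beta> (insert e B)"
  let ?c = "\<lambda>B. \<gamma> B + \<gamma> (insert e B)"
  let ?d = "\<lambda>B. \<delta> B + \<delta> (insert e B)"
  have "(\<Sum>B\<in>Pow E. ?a B) * (\<Sum>B\<in>Pow E. ?b B) \<le> (\<Sum>B\<in>Pow E. ?c B) * (\<Sum>B\<in>Pow E. ?d B)"
  proof (rule insert.IH)
    fix B assume "B \<subseteq> E"
    hence "B \<subseteq> insert e E" "insert e B \<subseteq> insert e E" by auto
    thus "0 \<le> ?a B \<and> 0 \<le> ?b B \<and> 0 \<le> ?c B \<and> 0 \<le> ?d B"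
      using insert.prems(1)[of B] insert.prems(1)[of "insert e B"] by auto
  next
    fix B B' assume B: "B \<subseteq> E" and B': "B' \<subseteq> E"
    have eB: "e \<notin> B" "e \<notin> B'" using B B' insert.hyps by auto
    have nn: "\<And>C. C \<subseteq> insert e E \<Longrightarrow> 0 \<le> \<alpha> C \<and> 0 \<le> \<beta> C \<and> 0 \<le> \<gamma> C \<and> 0 \<le> \<delta> C"
      using insert.prems(1) by blast
    have s1: "insert e B \<union> B' = insert e (B \<union> B')" "B \<union> insert e B' = insert e (B \<union> B')"
      "insert e B \<union> insert e B' = insert e (B \<union> B')" by auto
    have s2: "insert e B \<inter> B' = B \<inter> B'" "B \<inter> insert e B' = B \<inter> B'"
      "insert e B \<inter> insert e B' = insert e (B \<inter> B')" using eB by auto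
    have sub: "B \<subseteq> insert e E" "insert e B \<subseteq> insert e E" "B' \<subseteq> insert e E" "insert e B' \<subseteq> insert e E"
      "B \<union> B' \<subseteq> insert e E" "insert e (B \<union> B') \<subseteq> insert e E" "B \<inter> B' \<subseteq> insert e E"
      "insert e (B \<inter> B') \<subseteq> insert e E" using B B' by auto
    have h1: "\<alpha> B * \<beta> B' \<le> \<gamma> (B \<union> B') * \<delta> (B \<inter> B')" using insert.prems(2) sub by blast
    have h2: "\<alpha> B * \<beta> (insert e B') \<le> \<gamma> (insert e (B \<union> B')) * \<delta> (B \<inter> B')"
      using insert.prems(2)[OF sub(1) sub(4)] unfolding s1 s2 .
    have h3: "\<alpha> (insert e B) * \<beta> B' \<le> \<gamma> (insert e (B \<union> B')) * \<delta> (B \<inter> B')"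
      using insert.prems(2)[OF sub(2) sub(3)] unfolding s1 s2 .
    have h4: "\<alpha> (insert e B) * \<beta> (insert e B') \<le> \<gamma> (insert e (B \<union> B')) * \<delta> (insert e (B \<inter> B'))"
      using insert.prems(2)[OF sub(2) sub(4)] unfolding s1 s2 .
    show "?a B * ?b B' \<le> ?c (B \<union> B') * ?d (B \<inter> B')"
      by (rule two_point[OF _ _ _ _ _ _ _ _ h1 h2 h3 h4])
        (use nn[OF sub(1)] nn[OF sub(2)] nn[OF sub(3)] nn[OF sub(4)] nn[OF sub(5)] nn[OF sub(6)]
          nn[OF sub(7)] nn[OF sub(8)] in simp_all)
  qed
  thus ?case using insert.hyps by (simp add: sum_Pow_insert)
qed

definition ssum :: "nat \<Rightarrow> nat \<Rightarrow> real" where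
  "ssum q k = (\<Sum>x\<in>Fc q. x ^ k)"

lemma finite_Fc[simp]: "finite (Fc q)" unfolding Fc_def by simp

lemma card_Fc[simp]: "card (Fc q) = q"
proof -
  have "inj_on (\<lambda>k. real k - (real q - 1) / 2) {0..<q}" by (auto simp: inj_on_def)
  thus ?thesis unfolding Fc_def by (simp add: card_image)
qed

lemma Fc_neg: assumes "x \<in> Fc q" shows "- x \<in> Fc q"
proof -
  obtain k where k: "k < q" "x = real k - (real q - 1) / 2" using assms unfolding Fc_def by auto
  have "real (q - 1 - k) = real q - 1 - real k" using k by (simp add: of_nat_diff)
  hence "- x = real (q - 1 - k) - (real q - 1) / 2" using k by simp
  moreover have "q - 1 - k < q" using k by simp
  ultimately show ?thesis unfolding Fc_def by force
qed

lemma ssum_odd: assumes "odd k" shows "ssum q k = 0"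
proof -
  have b: "bij_betw uminus (Fc q) (Fc q)"
    by (rule bij_betwI[where g = uminus]) (auto simp: Fc_neg)
  have "ssum q k = (\<Sum>x\<in>Fc q. (- x) ^ k)" unfolding ssum_def
    using sum.reindex_bij_betw[OF b, of "\<lambda>x. x ^ k"] by simp
  also have "\<dots> = - ssum q k" using assms unfolding ssum_def by (simp add: sum_negf)
  finally show ?thesis by simp
qed

lemma ssum_nonneg: "0 \<le> ssum q k"
proof (cases "even k")
  case True thus ?thesis unfolding ssum_def by (intro sum_nonneg) (simp add: zero_le_even_power)
next
  case False thus ?thesis using ssum_odd by simp
qed

lemma ssum_0[simp]: "ssum q 0 = real q" unfolding ssum_def by simp

lemma cheb_term:
  fixes x y :: real assumes "even a" "even b"
  shows "0 \<le> (x ^ a - y ^ a) * (x ^ b - y ^ b)"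
proof -
  have ea: "x ^ a = \<bar>x\<bar> ^ a" "y ^ a = \<bar>y\<bar> ^ a" using assms by (simp_all add: power_even_abs)
  have eb: "x ^ b = \<bar>x\<bar> ^ b" "y ^ b = \<bar>y\<bar> ^ b" using assms by (simp_all add: power_even_abs)
  show ?thesis
  proof (cases "\<bar>x\<bar> \<le> \<bar>y\<bar>")
    case True
    hence "\<bar>x\<bar> ^ a \<le> \<bar>y\<bar> ^ a" "\<bar>x\<bar> ^ b \<le> \<bar>y\<bar> ^ b" by (simp_all add: power_mono)
    thus ?thesis unfolding ea eb by (intro mult_nonpos_nonpos) auto
  next
    case False
    hence "\<bar>y\<bar> ^ a \<le> \<bar>x\<bar> ^ a" "\<bar>y\<bar> ^ b \<le> \<bar>x\<bar> ^ b" by (simp_all add: power_mono)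
    thus ?thesis unfolding ea eb by (intro mult_nonneg_nonneg) auto
  qed
qed

lemma ssum_super: "ssum q a * ssum q b \<le> real q * ssum q (a + b)"
proof (cases "odd a \<or> odd b")
  case True
  thus ?thesis using ssum_odd[of a q] ssum_odd[of b q] ssum_nonneg[of q "a+b"] by auto
next
  case False
  hence ev: "even a" "even b" by auto
  let ?F = "Fc q"
  have "(\<Sum>x\<in>?F. \<Sum>y\<in>?F. (x ^ a - y ^ a) * (x ^ b - y ^ b))
      = (\<Sum>x\<in>?F. \<Sum>y\<in>?F. x ^ (a+b)) + (\<Sum>x\<in>?F. \<Sum>y\<in>?F. y ^ (a+b))
        - (\<Sum>x\<in>?F. \<Sum>y\<in>?F. x ^ a * y ^ b) - (\<Sum>x\<in>?F. \<Sum>y\<in>?F. y ^ a * x ^ b)"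
    by (simp add: algebra_simps sum.distrib sum_subtractf power_add)
  also have "\<dots> = 2 * (real q * ssum q (a+b)) - 2 * (ssum q a * ssum q b)"
    unfolding ssum_def by (simp add: sum_product[symmetric] sum_distrib_left[symmetric] sum_distrib_right[symmetric]
        sum.swap[of "\<lambda>x y. y ^ a * x ^ b"] algebra_simps)
  finally have e: "(\<Sum>x\<in>?F. \<Sum>y\<in>?F. (x ^ a - y ^ a) * (x ^ b - y ^ b)) = 2 * (real q * ssum q (a+b)) - 2 * (ssum q a * ssum q b)" .
  have "0 \<le> (\<Sum>x\<in>?F. \<Sum>y\<in>?F. (x ^ a - y ^ a) * (x ^ b - y ^ b))"
    by (intro sum_nonneg cheb_term ev)
  thus ?thesis using e by simp
qed

lemma prod_ssum_super:
  assumes "finite K" "0 < q"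
  shows "(\<Prod>b\<in>K. ssum q (c b) / real q) \<le> ssum q (\<Sum>b\<in>K. c b) / real q"
  using assms
proof (induction K rule: finite_induct)
  case empty thus ?case by simp
next
  case (insert x K)
  have "(\<Prod>b\<in>insert x K. ssum q (c b) / real q) = ssum q (c x) / real q * (\<Prod>b\<in>K. ssum q (c b) / real q)"
    using insert by simp
  also have "\<dots> \<le> ssum q (c x) / real q * (ssum q (\<Sum>b\<in>K. c b) / real q)"
    using insert ssum_nonneg by (intro mult_left_mono) auto
  also have "\<dots> \<le> ssum q (c x + (\<Sum>b\<in>K. c b)) / real q"
    using ssum_super[of q "c x" "\<Sum>b\<in>K. c b"] insert.prems by (simp add: field_simps)
  finally show ?case using insert by simp
qed

definition cnt :: "(nat \<Rightarrow> nat) \<Rightarrow> nat list \<Rightarrow> nat \<Rightarrow> nat" where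
  "cnt \<rho> R b = length (filter (\<lambda>i. \<rho> i = b) R)"

lemma cnt_Nil[simp]: "cnt \<rho> [] b = 0" by (simp add: cnt_def)
lemma cnt_Cons[simp]: "cnt \<rho> (x # R) b = (if \<rho> x = b then 1 else 0) + cnt \<rho> R b"
  by (simp add: cnt_def)
lemma cnt_append[simp]: "cnt \<rho> (R @ S) b = cnt \<rho> R b + cnt \<rho> S b"
  by (simp add: cnt_def)

lemma prod_list_rho:
  assumes "finite I" "\<forall>i\<in>set R. \<rho> i \<in> I"
  shows "prod_list (map (\<lambda>i. \<eta> (\<rho> i)) R) = (\<Prod>b\<in>I. (\<eta> b :: real) ^ cnt \<rho> R b)"
  using assms(2)
proof (induction R)
  case Nil thus ?case by simp
next
  case (Cons x R)
  have "(\<Prod>b\<in>I. \<eta> b ^ cnt \<rho> (x # R) b)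
      = (\<Prod>b\<in>I. \<eta> b ^ (if \<rho> x = b then 1 else 0)) * (\<Prod>b\<in>I. \<eta> b ^ cnt \<rho> R b)"
    by (simp add: power_add prod.distrib)
  also have "(\<Prod>b\<in>I. \<eta> b ^ (if \<rho> x = b then 1 else 0)) = (\<Prod>b\<in>I. if b = \<rho> x then \<eta> b else 1)"
    by (intro prod.cong) auto
  also have "\<dots> = \<eta> (\<rho> x)" using Cons.prems assms(1) by (simp add: prod.delta)
  finally show ?case using Cons by simp
qed

definition Yrho :: "nat \<Rightarrow> nat \<Rightarrow> (nat \<Rightarrow> nat) \<Rightarrow> (nat \<Rightarrow> real) set" where
  "Yrho q n \<rho> = {\<gamma> \<in> Omega q n. \<forall>i\<in>{1..n}. \<gamma> i = \<gamma> (\<rho> i)}"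

lemma sum_Yrho:
  assumes r1: "\<forall>i\<in>{1..n}. \<rho> i \<in> {1..n}" and r2: "\<forall>i\<in>{1..n}. \<rho> (\<rho> i) = \<rho> i"
    and R: "set R \<subseteq> {1..n}"
  shows "(\<Sum>\<gamma>\<in>Yrho q n \<rho>. sigmaR R \<gamma>) = (\<Prod>b\<in>\<rho> ` {1..n}. ssum q (cnt \<rho> R b))"
proof -
  let ?V = "{1..n}" let ?I = "\<rho> ` {1..n}"
  define g where "g \<eta> = restrict (\<lambda>i. \<eta> (\<rho> i)) ?V" for \<eta> :: "nat \<Rightarrow> real"
  have bij: "bij_betw g (PiE ?I (\<lambda>_. Fc q)) (Yrho q n \<rho>)"
  proof (rule bij_betwI[where g = "\<lambda>\<gamma>. restrict \<gamma> ?I"])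
    show "g \<in> PiE ?I (\<lambda>_. Fc q) \<rightarrow> Yrho q n \<rho>"
      using r1 r2 by (auto simp: g_def Yrho_def Omega_def PiE_iff)
    show "(\<lambda>\<gamma>. restrict \<gamma> ?I) \<in> Yrho q n \<rho> \<rightarrow> PiE ?I (\<lambda>_. Fc q)"
    proof
      fix \<gamma> assume "\<gamma> \<in> Yrho q n \<rho>"
      hence "\<gamma> \<in> PiE ?V (\<lambda>_. Fc q)" by (simp add: Yrho_def Omega_def)
      moreover have "?I \<subseteq> ?V" using r1 by auto
      ultimately show "restrict \<gamma> ?I \<in> PiE ?I (\<lambda>_. Fc q)" by (auto simp: PiE_iff)
    qed
    show "restrict (g \<eta>) ?I = \<eta>" if "\<eta> \<in> PiE ?I (\<lambda>_. Fc q)" for \<eta>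
    proof
      fix b show "restrict (g \<eta>) ?I b = \<eta> b"
      proof (cases "b \<in> ?I")
        case True
        then obtain i where i: "i \<in> ?V" "b = \<rho> i" by auto
        hence "b \<in> ?V" "\<rho> b = b" using r1 r2 by auto
        thus ?thesis using True by (simp add: g_def)
      next
        case False thus ?thesis using that by (simp add: PiE_def extensional_def)
      qed
    qed
    show "g (restrict \<gamma> ?I) = \<gamma>" if "\<gamma> \<in> Yrho q n \<rho>" for \<gamma>
    proof
      fix i show "g (restrict \<gamma> ?I) i = \<gamma> i"
      proof (cases "i \<in> ?V")
        case True thus ?thesis using that by (simp add: g_def Yrho_def)
      next
        case False
        have "\<gamma> \<in> PiE ?V (\<lambda>_. Fc q)" using that by (simp add: Yrho_def Omega_def)
        hence "\<gamma> i = undefined" using False by (simp add: PiE_def extensional_def)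
        moreover have "g (restrict \<gamma> ?I) i = undefined" using False unfolding g_def by auto
        ultimately show ?thesis by simp
      qed
    qed
  qed
  have "(\<Sum>\<gamma>\<in>Yrho q n \<rho>. sigmaR R \<gamma>) = (\<Sum>\<eta>\<in>PiE ?I (\<lambda>_. Fc q). sigmaR R (g \<eta>))"
    using sum.reindex_bij_betw[OF bij, of "sigmaR R"] by simp
  also have "\<dots> = (\<Sum>\<eta>\<in>PiE ?I (\<lambda>_. Fc q). \<Prod>b\<in>?I. \<eta> b ^ cnt \<rho> R b)"
  proof (rule sum.cong[OF refl])
    fix \<eta> assume "\<eta> \<in> PiE ?I (\<lambda>_. Fc q)"
    have "sigmaR R (g \<eta>) = prod_list (map (\<lambda>i. \<eta> (\<rho> i)) R)"
      unfolding sigmaR_def g_def using R by (intro arg_cong[where f = prod_list] map_cong) auto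
    also have "\<dots> = (\<Prod>b\<in>?I. \<eta> b ^ cnt \<rho> R b)"
      using R by (intro prod_list_rho) auto
    finally show "sigmaR R (g \<eta>) = (\<Prod>b\<in>?I. \<eta> b ^ cnt \<rho> R b)" .
  qed
  also have "\<dots> = (\<Prod>b\<in>?I. \<Sum>x\<in>Fc q. x ^ cnt \<rho> R b)"
    by (rule prod_sum_PiE[symmetric]) auto
  finally show ?thesis unfolding ssum_def .
qed

lemma card_Yrho:
  assumes r1: "\<forall>i\<in>{1..n}. \<rho> i \<in> {1..n}" and r2: "\<forall>i\<in>{1..n}. \<rho> (\<rho> i) = \<rho> i"
  shows "real (card (Yrho q n \<rho>)) = real q ^ card (\<rho> ` {1..n})"
  using sum_Yrho[OF r1 r2, of "[]" q] by (simp add: sigmaR_def)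

definition XB :: "nat \<Rightarrow> nat \<Rightarrow> nat set set \<Rightarrow> (nat \<Rightarrow> real) set" where
  "XB q n B = {\<gamma> \<in> Omega q n. \<forall>A\<in>B. delta A \<gamma> = 1}"

definition relB :: "nat \<Rightarrow> nat \<Rightarrow> nat set set \<Rightarrow> nat \<Rightarrow> nat \<Rightarrow> bool" where
  "relB q n B i j = (\<forall>\<gamma>\<in>XB q n B. \<gamma> i = \<gamma> j)"

definition rhoB :: "nat \<Rightarrow> nat \<Rightarrow> nat set set \<Rightarrow> nat \<Rightarrow> nat" where
  "rhoB q n B i = (LEAST j. j \<in> {1..n} \<and> relB q n B i j)"

lemma rhoB_in:
  assumes "i \<in> {1..n}"
  shows "rhoB q n B i \<in> {1..n} \<and> relB q n B i (rhoB q n B i)"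
  unfolding rhoB_def by (rule LeastI[of _ i]) (use assms in \<open>simp add: relB_def\<close>)

lemma rhoB_eq:
  assumes "relB q n B i j"
  shows "rhoB q n B i = rhoB q n B j"
proof -
  have "(\<lambda>k. k \<in> {1..n} \<and> relB q n B i k) = (\<lambda>k. k \<in> {1..n} \<and> relB q n B j k)"
  proof (intro ext)
    fix k
    have h: "\<And>\<gamma>. \<gamma> \<in> XB q n B \<Longrightarrow> \<gamma> i = \<gamma> j" using assms unfolding relB_def by blast
    have "relB q n B i k = relB q n B j k" unfolding relB_def
    proof
      assume a: "\<forall>\<gamma>\<in>XB q n B. \<gamma> i = \<gamma> k" show "\<forall>\<gamma>\<in>XB q n B. \<gamma> j = \<gamma> k"
      proof
        fix \<gamma> assume g: "\<gamma> \<in> XB q n B" show "\<gamma> j = \<gamma> k" using h[OF g] bspec[OF a g] by linarith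
      qed
    next
      assume a: "\<forall>\<gamma>\<in>XB q n B. \<gamma> j = \<gamma> k" show "\<forall>\<gamma>\<in>XB q n B. \<gamma> i = \<gamma> k"
      proof
        fix \<gamma> assume g: "\<gamma> \<in> XB q n B" show "\<gamma> i = \<gamma> k" using h[OF g] bspec[OF a g] by linarith
      qed
    qed
    thus "(k \<in> {1..n} \<and> relB q n B i k) = (k \<in> {1..n} \<and> relB q n B j k)" by simp
  qed
  thus ?thesis unfolding rhoB_def by simp
qed

lemma rhoB_idem:
  assumes "i \<in> {1..n}"
  shows "rhoB q n B (rhoB q n B i) = rhoB q n B i"
proof -
  have a: "\<forall>\<gamma>\<in>XB q n B. \<gamma> i = \<gamma> (rhoB q n B i)" using rhoB_in[OF assms, of q B] unfolding relB_def by blast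
  have "relB q n B (rhoB q n B i) i" unfolding relB_def
  proof
    fix \<gamma> assume g: "\<gamma> \<in> XB q n B" show "\<gamma> (rhoB q n B i) = \<gamma> i" using bspec[OF a g] by (rule sym)
  qed
  thus ?thesis by (rule rhoB_eq)
qed

lemma XB_eq:
  assumes "\<forall>A\<in>B. A \<subseteq> {1..n}"
  shows "XB q n B = Yrho q n (rhoB q n B)"
proof
  show "XB q n B \<subseteq> Yrho q n (rhoB q n B)"
  proof
    fix \<gamma> assume g: "\<gamma> \<in> XB q n B"
    have "\<forall>i\<in>{1..n}. \<gamma> i = \<gamma> (rhoB q n B i)"
    proof
      fix i assume "i \<in> {1..n}"
      hence "\<forall>\<gamma>\<in>XB q n B. \<gamma> i = \<gamma> (rhoB q n B i)" using rhoB_in unfolding relB_def by blast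
      thus "\<gamma> i = \<gamma> (rhoB q n B i)" using g by blast
    qed
    moreover have "\<gamma> \<in> Omega q n" using g unfolding XB_def by blast
    ultimately show "\<gamma> \<in> Yrho q n (rhoB q n B)" unfolding Yrho_def by blast
  qed
next
  show "Yrho q n (rhoB q n B) \<subseteq> XB q n B"
  proof
    fix \<gamma> assume g: "\<gamma> \<in> Yrho q n (rhoB q n B)"
    have "delta A \<gamma> = 1" if A: "A \<in> B" for A
    proof -
      have "\<gamma> i = \<gamma> j" if ij: "i \<in> A" "j \<in> A" for i j
      proof -
        have V: "i \<in> {1..n}" "j \<in> {1..n}" using ij A assms by blast+
        have "relB q n B i j" unfolding relB_def
        proof
          fix \<gamma>' assume "\<gamma>' \<in> XB q n B"
          hence "delta A \<gamma>' = 1" using A unfolding XB_def by blast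
          hence "\<forall>i\<in>A. \<forall>j\<in>A. \<gamma>' i = \<gamma>' j" unfolding delta_def by (metis zero_neq_one)
          thus "\<gamma>' i = \<gamma>' j" using ij by blast
        qed
        hence "rhoB q n B i = rhoB q n B j" by (rule rhoB_eq)
        moreover have "\<gamma> i = \<gamma> (rhoB q n B i)" "\<gamma> j = \<gamma> (rhoB q n B j)"
          using g V unfolding Yrho_def by blast+
        ultimately show ?thesis by metis
      qed
      hence "\<forall>i\<in>A. \<forall>j\<in>A. \<gamma> i = \<gamma> j" by blast
      thus ?thesis unfolding delta_def by (rule if_P)
    qed
    moreover have "\<gamma> \<in> Omega q n" using g unfolding Yrho_def by blast
    ultimately show "\<gamma> \<in> XB q n B" unfolding XB_def by blast
  qed
qed

lemma XB_anti: "B \<subseteq> B' \<Longrightarrow> XB q n B' \<subseteq> XB q n B"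
  unfolding XB_def by auto

lemma rhoB_mono:
  assumes "B \<subseteq> B'" "i \<in> {1..n}"
  shows "rhoB q n B' (rhoB q n B i) = rhoB q n B' i"
proof -
  have "relB q n B i (rhoB q n B i)" using rhoB_in[OF assms(2)] by blast
  hence a: "\<forall>\<gamma>\<in>XB q n B. \<gamma> i = \<gamma> (rhoB q n B i)" unfolding relB_def .
  have "relB q n B' (rhoB q n B i) i" unfolding relB_def
  proof
    fix \<gamma> assume "\<gamma> \<in> XB q n B'"
    hence g: "\<gamma> \<in> XB q n B" using XB_anti[OF assms(1), of q n] by blast
    show "\<gamma> (rhoB q n B i) = \<gamma> i" using bspec[OF a g] by linarith
  qed
  thus ?thesis by (rule rhoB_eq)
qed

definition mprod :: "nat \<Rightarrow> nat \<Rightarrow> (nat \<Rightarrow> nat) \<Rightarrow> nat list \<Rightarrow> real" where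
  "mprod q n \<rho> R = (\<Prod>b\<in>\<rho> ` {1..n}. ssum q (cnt \<rho> R b) / real q)"

lemma mprod_nonneg: "0 \<le> mprod q n \<rho> R"
  unfolding mprod_def by (intro prod_nonneg) (simp add: ssum_nonneg)

lemma sum_XB:
  assumes "\<forall>A\<in>B. A \<subseteq> {1..n}" "set R \<subseteq> {1..n}" "0 < q"
  shows "(\<Sum>\<gamma>\<in>XB q n B. sigmaR R \<gamma>) = real (card (XB q n B)) * mprod q n (rhoB q n B) R"
proof -
  let ?\<rho> = "rhoB q n B"
  have r1: "\<forall>i\<in>{1..n}. ?\<rho> i \<in> {1..n}" and r2: "\<forall>i\<in>{1..n}. ?\<rho> (?\<rho> i) = ?\<rho> i"
    using rhoB_in rhoB_idem by auto
  have "(\<Sum>\<gamma>\<in>XB q n B. sigmaR R \<gamma>) = (\<Prod>b\<in>?\<rho> ` {1..n}. ssum q (cnt ?\<rho> R b))"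
    unfolding XB_eq[OF assms(1)] by (rule sum_Yrho[OF r1 r2 assms(2)])
  also have "\<dots> = (\<Prod>b\<in>?\<rho> ` {1..n}. real q * (ssum q (cnt ?\<rho> R b) / real q))"
    using assms(3) by simp
  also have "\<dots> = real q ^ card (?\<rho> ` {1..n}) * mprod q n ?\<rho> R"
    unfolding mprod_def by (simp only: prod.distrib prod_constant)
  also have "real q ^ card (?\<rho> ` {1..n}) = real (card (XB q n B))"
    unfolding XB_eq[OF assms(1)] by (rule card_Yrho[OF r1 r2, symmetric])
  finally show ?thesis .
qed

lemma cnt_group:
  assumes "\<forall>i\<in>set R. \<rho> i \<in> I \<and> \<rho>' (\<rho> i) = \<rho>' i" "finite I"
  shows "cnt \<rho>' R b' = (\<Sum>b\<in>{b\<in>I. \<rho>' b = b'}. cnt \<rho> R b)"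
  using assms(1)
proof (induction R)
  case Nil thus ?case by simp
next
  case (Cons x R)
  have "(\<Sum>b\<in>{b\<in>I. \<rho>' b = b'}. cnt \<rho> (x # R) b)
       = (\<Sum>b\<in>{b\<in>I. \<rho>' b = b'}. if \<rho> x = b then 1 else 0) + (\<Sum>b\<in>{b\<in>I. \<rho>' b = b'}. cnt \<rho> R b)"
    by (simp add: sum.distrib)
  also have "(\<Sum>b\<in>{b\<in>I. \<rho>' b = b'}. if \<rho> x = b then 1 else (0::nat)) = (if \<rho>' x = b' then 1 else 0)"
    using Cons.prems assms(2) by (simp add: sum.delta)
  finally show ?case using Cons by simp
qed

lemma mprod_mono:
  assumes "B \<subseteq> B'" "set R \<subseteq> {1..n}" "0 < q"
  shows "mprod q n (rhoB q n B) R \<le> mprod q n (rhoB q n B') R"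
proof -
  let ?\<rho> = "rhoB q n B" let ?\<rho>' = "rhoB q n B'"
  let ?I = "?\<rho> ` {1..n}" let ?I' = "?\<rho>' ` {1..n}"
  let ?f = "\<lambda>b. ssum q (cnt ?\<rho> R b) / real q"
  have sub: "?\<rho>' ` ?I \<subseteq> ?I'"
  proof
    fix x assume "x \<in> ?\<rho>' ` ?I"
    then obtain i where i: "i \<in> {1..n}" "x = ?\<rho>' (?\<rho> i)" by blast
    hence "x = ?\<rho>' i" using rhoB_mono[OF assms(1) i(1)] by simp
    thus "x \<in> ?I'" using i(1) by blast
  qed
  have "mprod q n ?\<rho> R = (\<Prod>b'\<in>?I'. \<Prod>b\<in>{b\<in>?I. ?\<rho>' b = b'}. ?f b)"
    unfolding mprod_def by (rule prod.group[symmetric, OF _ _ sub]) auto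
  also have "\<dots> \<le> (\<Prod>b'\<in>?I'. ssum q (\<Sum>b\<in>{b\<in>?I. ?\<rho>' b = b'}. cnt ?\<rho> R b) / real q)"
  proof (rule prod_mono, rule conjI)
    fix b'
    show "0 \<le> (\<Prod>b\<in>{b\<in>?I. ?\<rho>' b = b'}. ?f b)" by (intro prod_nonneg) (simp add: ssum_nonneg)
    show "(\<Prod>b\<in>{b\<in>?I. ?\<rho>' b = b'}. ?f b) \<le> ssum q (\<Sum>b\<in>{b\<in>?I. ?\<rho>' b = b'}. cnt ?\<rho> R b) / real q"
      by (rule prod_ssum_super[OF _ assms(3)]) simp
  qed
  also have "\<dots> = mprod q n ?\<rho>' R"
  proof -
    have "\<forall>i\<in>set R. ?\<rho> i \<in> ?I \<and> ?\<rho>' (?\<rho> i) = ?\<rho>' i"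
      using assms(2) rhoB_mono[OF assms(1)] by auto
    thus ?thesis unfolding mprod_def using cnt_group[of R ?\<rho> ?I ?\<rho>'] by simp
  qed
  finally show ?thesis .
qed

lemma mprod_mult:
  assumes "0 < q"
  shows "mprod q n \<rho> R * mprod q n \<rho> S \<le> mprod q n \<rho> (R @ S)"
proof -
  have "mprod q n \<rho> R * mprod q n \<rho> S = (\<Prod>b\<in>\<rho> ` {1..n}. (ssum q (cnt \<rho> R b) / real q) * (ssum q (cnt \<rho> S b) / real q))"
    unfolding mprod_def by (simp only: prod.distrib)
  also have "\<dots> \<le> mprod q n \<rho> (R @ S)"
    unfolding mprod_def
  proof (intro prod_mono conjI)
    fix b
    show "0 \<le> ssum q (cnt \<rho> R b) / real q * (ssum q (cnt \<rho> S b) / real q)"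
      by (simp add: ssum_nonneg)
    show "ssum q (cnt \<rho> R b) / real q * (ssum q (cnt \<rho> S b) / real q) \<le> ssum q (cnt \<rho> (R @ S) b) / real q"
    proof -
      have "ssum q (cnt \<rho> R b) / real q * (ssum q (cnt \<rho> S b) / real q)
          = (ssum q (cnt \<rho> R b) * ssum q (cnt \<rho> S b)) / real q / real q" by simp
      also have "\<dots> \<le> (real q * ssum q (cnt \<rho> (R @ S) b)) / real q / real q"
        using ssum_super[of q "cnt \<rho> R b" "cnt \<rho> S b"] assms by (intro divide_right_mono) auto
      also have "\<dots> = ssum q (cnt \<rho> (R @ S) b) / real q" using assms by simp
      finally show ?thesis .
    qed
  qed
  finally show ?thesis .
qed

lemma card_mult_le:
  fixes U W T :: "'a set" and ad sb :: "'a \<Rightarrow> 'a \<Rightarrow> 'a"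
  assumes fin: "finite T" "finite U" "finite W"
    and adT: "\<And>u w. u \<in> U \<Longrightarrow> w \<in> W \<Longrightarrow> ad u w \<in> T"
    and sbU: "\<And>u u'. u \<in> U \<Longrightarrow> u' \<in> U \<Longrightarrow> sb u' u \<in> U"
    and sbW: "\<And>w w'. w \<in> W \<Longrightarrow> w' \<in> W \<Longrightarrow> sb w w' \<in> W"
    and law1: "\<And>u w u' w'. u \<in> U \<Longrightarrow> w \<in> W \<Longrightarrow> u' \<in> U \<Longrightarrow> w' \<in> W \<Longrightarrow> ad u w = ad u' w' \<Longrightarrow> sb u' u = sb w w'"
    and law2: "\<And>u u' u''. u \<in> U \<Longrightarrow> u' \<in> U \<Longrightarrow> u'' \<in> U \<Longrightarrow> sb u' u = sb u'' u \<Longrightarrow> u' = u''"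
    and law3: "\<And>u w w'. u \<in> U \<Longrightarrow> w \<in> W \<Longrightarrow> w' \<in> W \<Longrightarrow> ad u w = ad u w' \<Longrightarrow> w = w'"
  shows "card U * card W \<le> card T * card (U \<inter> W)"
proof -
  let ?P = "U \<times> W"
  let ?fib = "\<lambda>z. {p \<in> ?P. ad (fst p) (snd p) = z}"
  have "card U * card W = card ?P" by (simp add: card_cartesian_product)
  also have "\<dots> = (\<Sum>z\<in>T. card (?fib z))"
  proof -
    have "(\<Sum>z\<in>T. \<Sum>p\<in>?fib z. (1::nat)) = (\<Sum>p\<in>?P. 1)"
      by (rule sum.group) (use fin adT in auto)
    thus ?thesis by simp
  qed
  also have "\<dots> \<le> (\<Sum>z\<in>T. card (U \<inter> W))"
  proof (rule sum_mono)
    fix z assume "z \<in> T"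
    show "card (?fib z) \<le> card (U \<inter> W)"
    proof (cases "?fib z = {}")
      case True show ?thesis by (subst True) simp
    next
      case False
      then obtain u0 w0 where p0: "u0 \<in> U" "w0 \<in> W" "ad u0 w0 = z" by auto
      have "inj_on (\<lambda>p. sb (fst p) u0) (?fib z)"
      proof (rule inj_onI)
        fix p p' assume p: "p \<in> ?fib z" and p': "p' \<in> ?fib z" and e: "sb (fst p) u0 = sb (fst p') u0"
        have f: "fst p = fst p'" using law2[OF p0(1) _ _ e] p p' by auto
        have "ad (fst p) (snd p) = ad (fst p) (snd p')" using p p' f by auto
        hence "snd p = snd p'" using law3 p p' by auto
        thus "p = p'" using f by (simp add: prod_eq_iff)
      qed
      moreover have "(\<lambda>p. sb (fst p) u0) ` (?fib z) \<subseteq> U \<inter> W"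
      proof
        fix x assume "x \<in> (\<lambda>p. sb (fst p) u0) ` (?fib z)"
        then obtain u w where uw: "u \<in> U" "w \<in> W" "ad u w = z" "x = sb u u0" by auto
        have "x = sb w0 w" using law1[OF p0(1,2) uw(1,2)] uw p0 by simp
        moreover have "x \<in> U" using uw(1) p0(1) sbU uw(4) by blast
        moreover have "sb w0 w \<in> W" using uw(2) p0(2) sbW by blast
        ultimately show "x \<in> U \<inter> W" by simp
      qed
      ultimately show ?thesis using fin by (intro card_inj_on_le) auto
    qed
  qed
  also have "\<dots> = card T * card (U \<inter> W)" by simp
  finally show ?thesis .
qed

definition fi :: "nat \<Rightarrow> real \<Rightarrow> nat" where "fi q x = nat \<lfloor>x + (real q - 1) / 2\<rfloor>"
definition fv :: "nat \<Rightarrow> nat \<Rightarrow> real" where "fv q k = real k - (real q - 1) / 2"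

lemma fi_fv: "fi q (fv q k) = k" unfolding fi_def fv_def by simp

lemma Fc_fv: "x \<in> Fc q \<longleftrightarrow> (\<exists>k<q. x = fv q k)" unfolding Fc_def fv_def by auto

lemma fv_fi: "x \<in> Fc q \<Longrightarrow> fv q (fi q x) = x \<and> fi q x < q"
  unfolding Fc_fv by (auto simp: fi_fv)

lemma fv_inj: "fv q a = fv q b \<Longrightarrow> a = b" unfolding fv_def by simp

definition fop :: "nat \<Rightarrow> real \<Rightarrow> real \<Rightarrow> real" where
  "fop q x y = fv q ((fi q x + fi q y) mod q)"
definition fsb :: "nat \<Rightarrow> real \<Rightarrow> real \<Rightarrow> real" where
  "fsb q x y = fv q ((fi q x + q - fi q y) mod q)"

lemma nat_law1:
  fixes a b a' b' q :: nat
  assumes "a < q" "b < q" "a' < q" "b' < q" "(a + b) mod q = (a' + b') mod q"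
  shows "(a' + q - a) mod q = (b + q - b') mod q"
proof -
  have "int (a + b) mod int q = int (a' + b') mod int q" using assms(5) by (metis of_nat_mod)
  hence d: "int q dvd (int a + int b) - (int a' + int b')" by (simp add: mod_eq_dvd_iff)
  have "int q dvd (int a' + int q - int a) - (int b + int q - int b')"
    using dvd_minus_iff[THEN iffD2, OF d] by (simp add: algebra_simps)
  hence "(int a' + int q - int a) mod int q = (int b + int q - int b') mod int q"
    by (simp add: mod_eq_dvd_iff)
  moreover have "int (a' + q - a) = int a' + int q - int a" "int (b + q - b') = int b + int q - int b'"
    using assms by auto
  ultimately have "int ((a' + q - a) mod q) = int ((b + q - b') mod q)"
    by (simp add: of_nat_mod)
  thus ?thesis by simp
qed

lemma nat_law2:
  fixes a a' a'' q :: nat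
  assumes "a < q" "a' < q" "a'' < q" "(a' + q - a) mod q = (a'' + q - a) mod q"
  shows "a' = a''"
proof -
  have "int ((a' + q - a) mod q) = int ((a'' + q - a) mod q)" using assms(4) by simp
  moreover have "int (a' + q - a) = int a' + int q - int a" "int (a'' + q - a) = int a'' + int q - int a"
    using assms by auto
  ultimately have "(int a' + int q - int a) mod int q = (int a'' + int q - int a) mod int q"
    by (simp add: of_nat_mod)
  hence "int a' mod int q = int a'' mod int q"
    by (simp add: mod_eq_dvd_iff algebra_simps)
  thus ?thesis using assms by simp
qed

lemma nat_law3:
  fixes a b b' q :: nat
  assumes "b < q" "b' < q" "(a + b) mod q = (a + b') mod q"
  shows "b = b'"
proof -
  have "int (a + b) mod int q = int (a + b') mod int q" using assms(3) by (metis of_nat_mod)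
  hence "int b mod int q = int b' mod int q"
    by (simp add: mod_eq_dvd_iff algebra_simps)
  thus ?thesis using assms by simp
qed

lemma fop_in: "0 < q \<Longrightarrow> fop q x y \<in> Fc q"
  unfolding fop_def Fc_fv by (intro exI[of _ "(fi q x + fi q y) mod q"]) simp
lemma fsb_in: "0 < q \<Longrightarrow> fsb q x y \<in> Fc q"
  unfolding fsb_def Fc_fv by (intro exI[of _ "(fi q x + q - fi q y) mod q"]) simp

lemma pl1:
  assumes "x \<in> Fc q" "y \<in> Fc q" "x' \<in> Fc q" "y' \<in> Fc q" "fop q x y = fop q x' y'"
  shows "fsb q x' x = fsb q y y'"
proof -
  have "(fi q x + fi q y) mod q = (fi q x' + fi q y') mod q" using assms(5) unfolding fop_def by (rule fv_inj)
  hence "(fi q x' + q - fi q x) mod q = (fi q y + q - fi q y') mod q"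
    by (rule nat_law1[OF conjunct2[OF fv_fi[OF assms(1)]] conjunct2[OF fv_fi[OF assms(2)]]
          conjunct2[OF fv_fi[OF assms(3)]] conjunct2[OF fv_fi[OF assms(4)]]])
  thus ?thesis unfolding fsb_def by simp
qed

lemma pl2:
  assumes "x \<in> Fc q" "x' \<in> Fc q" "x'' \<in> Fc q" "fsb q x' x = fsb q x'' x"
  shows "x' = x''"
proof -
  have "(fi q x' + q - fi q x) mod q = (fi q x'' + q - fi q x) mod q" using assms(4) unfolding fsb_def by (rule fv_inj)
  hence "fi q x' = fi q x''"
    by (rule nat_law2[OF conjunct2[OF fv_fi[OF assms(1)]] conjunct2[OF fv_fi[OF assms(2)]]
          conjunct2[OF fv_fi[OF assms(3)]]])
  hence "fv q (fi q x') = fv q (fi q x'')" by simp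
  thus ?thesis using fv_fi[OF assms(2)] fv_fi[OF assms(3)] by simp
qed

lemma pl3:
  assumes "y \<in> Fc q" "y' \<in> Fc q" "fop q x y = fop q x y'"
  shows "y = y'"
proof -
  have "(fi q x + fi q y) mod q = (fi q x + fi q y') mod q" using assms(3) unfolding fop_def by (rule fv_inj)
  hence "fi q y = fi q y'"
    by (rule nat_law3[OF conjunct2[OF fv_fi[OF assms(1)]] conjunct2[OF fv_fi[OF assms(2)]]])
  hence "fv q (fi q y) = fv q (fi q y')" by simp
  thus ?thesis using fv_fi[OF assms(1)] fv_fi[OF assms(2)] by simp
qed

definition AD :: "nat \<Rightarrow> nat \<Rightarrow> (nat \<Rightarrow> real) \<Rightarrow> (nat \<Rightarrow> real) \<Rightarrow> (nat \<Rightarrow> real)" where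
  "AD q n u w = restrict (\<lambda>i. fop q (u i) (w i)) {1..n}"
definition SB :: "nat \<Rightarrow> nat \<Rightarrow> (nat \<Rightarrow> real) \<Rightarrow> (nat \<Rightarrow> real) \<Rightarrow> (nat \<Rightarrow> real)" where
  "SB q n u w = restrict (\<lambda>i. fsb q (u i) (w i)) {1..n}"

lemma Omega_ext:
  assumes "u \<in> Omega q n" "v \<in> Omega q n" "\<And>i. i \<in> {1..n} \<Longrightarrow> u i = v i"
  shows "u = v"
  using assms unfolding Omega_def by (metis PiE_ext)

lemma Omega_val: "u \<in> Omega q n \<Longrightarrow> i \<in> {1..n} \<Longrightarrow> u i \<in> Fc q"
  unfolding Omega_def by auto

lemma AD_Omega: "0 < q \<Longrightarrow> AD q n u w \<in> Omega q n"
  unfolding AD_def Omega_def by (auto simp: fop_in)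
lemma SB_Omega: "0 < q \<Longrightarrow> SB q n u w \<in> Omega q n"
  unfolding SB_def Omega_def by (auto simp: fsb_in)

lemma delta_pointwise:
  assumes "A \<subseteq> {1..n}" "delta A u = 1" "delta A w = 1"
  shows "delta A (restrict (\<lambda>i. f (u i) (w i)) {1..n}) = 1"
proof -
  have u: "\<forall>i\<in>A. \<forall>j\<in>A. u i = u j" using assms(2) unfolding delta_def by (metis zero_neq_one)
  have w: "\<forall>i\<in>A. \<forall>j\<in>A. w i = w j" using assms(3) unfolding delta_def by (metis zero_neq_one)
  have "\<forall>i\<in>A. \<forall>j\<in>A. restrict (\<lambda>i. f (u i) (w i)) {1..n} i = restrict (\<lambda>i. f (u i) (w i)) {1..n} j"
  proof (intro ballI)
    fix i j assume ij: "i \<in> A" "j \<in> A"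
    hence "i \<in> {1..n}" "j \<in> {1..n}" using assms(1) by blast+
    moreover have "u i = u j" "w i = w j" using u w ij by blast+
    ultimately show "restrict (\<lambda>i. f (u i) (w i)) {1..n} i = restrict (\<lambda>i. f (u i) (w i)) {1..n} j" by simp
  qed
  thus ?thesis unfolding delta_def by (rule if_P)
qed

lemma XB_closed:
  assumes "\<forall>A\<in>B. A \<subseteq> {1..n}" "u \<in> XB q n B" "w \<in> XB q n B" "0 < q"
  shows "AD q n u w \<in> XB q n B" "SB q n u w \<in> XB q n B"
proof -
  have u: "u \<in> Omega q n" "\<forall>A\<in>B. delta A u = 1" and w: "w \<in> Omega q n" "\<forall>A\<in>B. delta A w = 1"
    using assms(2,3) unfolding XB_def by blast+
  have "\<forall>A\<in>B. delta A (AD q n u w) = 1"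
    unfolding AD_def using delta_pointwise assms(1) u(2) w(2) by blast
  thus "AD q n u w \<in> XB q n B" using AD_Omega[OF assms(4)] unfolding XB_def by blast
  have "\<forall>A\<in>B. delta A (SB q n u w) = 1"
    unfolding SB_def using delta_pointwise assms(1) u(2) w(2) by blast
  thus "SB q n u w \<in> XB q n B" using SB_Omega[OF assms(4)] unfolding XB_def by blast
qed

lemma finite_XB: "finite (XB q n B)"
proof -
  have "finite (Omega q n)" unfolding Omega_def by (intro finite_PiE) auto
  thus ?thesis unfolding XB_def by simp
qed

lemma W_lattice:
  assumes "\<forall>A\<in>B. A \<subseteq> {1..n}" "\<forall>A\<in>B'. A \<subseteq> {1..n}" "0 < q"
  shows "real (card (XB q n B)) * real (card (XB q n B'))
       \<le> real (card (XB q n (B \<inter> B'))) * real (card (XB q n (B \<union> B')))"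
proof -
  let ?U = "XB q n B" let ?W = "XB q n B'" let ?T = "XB q n (B \<inter> B')"
  have i: "?U \<inter> ?W = XB q n (B \<union> B')" unfolding XB_def by auto
  have UO: "\<And>u. u \<in> ?U \<Longrightarrow> u \<in> Omega q n" and WO: "\<And>u. u \<in> ?W \<Longrightarrow> u \<in> Omega q n"
    unfolding XB_def by auto
  have "card ?U * card ?W \<le> card ?T * card (?U \<inter> ?W)"
  proof (rule card_mult_le[where ad = "AD q n" and sb = "SB q n"])
    show "finite ?T" "finite ?U" "finite ?W" by (rule finite_XB)+
  next
    fix u w assume "u \<in> ?U" "w \<in> ?W"
    hence "u \<in> ?T" "w \<in> ?T" using XB_anti[of "B \<inter> B'"] by blast+
    thus "AD q n u w \<in> ?T" using XB_closed(1)[of "B \<inter> B'" n u q w] assms by blast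
  next
    fix u u' assume "u \<in> ?U" "u' \<in> ?U" thus "SB q n u' u \<in> ?U" using XB_closed(2) assms by blast
  next
    fix u u' assume "u \<in> ?W" "u' \<in> ?W" thus "SB q n u u' \<in> ?W" using XB_closed(2) assms by blast
  next
    fix u w u' w' assume h: "u \<in> ?U" "w \<in> ?W" "u' \<in> ?U" "w' \<in> ?W" "AD q n u w = AD q n u' w'"
    show "SB q n u' u = SB q n w w'"
    proof (rule Omega_ext[OF SB_Omega[OF assms(3)] SB_Omega[OF assms(3)]])
      fix i assume iV: "i \<in> {1..n}"
      have "AD q n u w i = AD q n u' w' i" using h(5) by simp
      hence "fop q (u i) (w i) = fop q (u' i) (w' i)" using iV unfolding AD_def by simp
      hence "fsb q (u' i) (u i) = fsb q (w i) (w' i)"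
        by (rule pl1[OF Omega_val[OF UO[OF h(1)] iV] Omega_val[OF WO[OF h(2)] iV]
              Omega_val[OF UO[OF h(3)] iV] Omega_val[OF WO[OF h(4)] iV]])
      thus "SB q n u' u i = SB q n w w' i" using iV unfolding SB_def by simp
    qed
  next
    fix u u' u'' assume h: "u \<in> ?U" "u' \<in> ?U" "u'' \<in> ?U" "SB q n u' u = SB q n u'' u"
    show "u' = u''"
    proof (rule Omega_ext[OF UO[OF h(2)] UO[OF h(3)]])
      fix i assume iV: "i \<in> {1..n}"
      have "SB q n u' u i = SB q n u'' u i" using h(4) by simp
      hence "fsb q (u' i) (u i) = fsb q (u'' i) (u i)" using iV unfolding SB_def by simp
      thus "u' i = u'' i"
        by (rule pl2[OF Omega_val[OF UO[OF h(1)] iV] Omega_val[OF UO[OF h(2)] iV] Omega_val[OF UO[OF h(3)] iV]])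
    qed
  next
    fix u w w' assume h: "u \<in> ?U" "w \<in> ?W" "w' \<in> ?W" "AD q n u w = AD q n u w'"
    show "w = w'"
    proof (rule Omega_ext[OF WO[OF h(2)] WO[OF h(3)]])
      fix i assume iV: "i \<in> {1..n}"
      have "AD q n u w i = AD q n u w' i" using h(4) by simp
      hence "fop q (u i) (w i) = fop q (u i) (w' i)" using iV unfolding AD_def by simp
      thus "w i = w' i"
        by (rule pl3[OF Omega_val[OF WO[OF h(2)] iV] Omega_val[OF WO[OF h(3)] iV]])
    qed
  qed
  hence "real (card ?U * card ?W) \<le> real (card ?T * card (?U \<inter> ?W))" by linarith
  thus ?thesis unfolding i by simp
qed

lemma delta_01: "delta A \<gamma> = 0 \<or> delta A \<gamma> = 1" unfolding delta_def by simp

lemma prod_delta: "finite B \<Longrightarrow> (\<Prod>A\<in>B. delta A \<gamma>) = (if \<forall>A\<in>B. delta A \<gamma> = 1 then 1 else 0)"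
proof -
  assume "finite B"
  show ?thesis
proof (cases "\<forall>A\<in>B. delta A \<gamma> = 1")
  case True thus ?thesis by simp
next
  case False
  then obtain A where "A \<in> B" "delta A \<gamma> \<noteq> 1" by blast
  hence "A \<in> B" "delta A \<gamma> = 0" using delta_01 by auto
  thus ?thesis using False \<open>finite B\<close> by (auto intro: prod_zero)
qed
qed

lemma finite_interactions: "finite (interactions n)"
proof -
  have "interactions n \<subseteq> Pow {1..n}" unfolding interactions_def by auto
  thus ?thesis by (rule finite_subset) simp
qed

lemma M_nonneg:
  assumes "\<forall>A\<in>B. A \<subseteq> {1..n}" "set R \<subseteq> {1..n}" "0 < q"
  shows "0 \<le> (\<Sum>\<gamma>\<in>XB q n B. sigmaR R \<gamma>)"
  unfolding sum_XB[OF assms] by (intro mult_nonneg_nonneg mprod_nonneg) simp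

lemma M_key:
  assumes B: "\<forall>A\<in>B. A \<subseteq> {1..n}" and B': "\<forall>A\<in>B'. A \<subseteq> {1..n}"
    and R: "set R \<subseteq> {1..n}" and S: "set S \<subseteq> {1..n}" and q: "0 < q"
  shows "(\<Sum>\<gamma>\<in>XB q n B. sigmaR R \<gamma>) * (\<Sum>\<gamma>\<in>XB q n B'. sigmaR S \<gamma>)
       \<le> (\<Sum>\<gamma>\<in>XB q n (B \<union> B'). sigmaR (R @ S) \<gamma>) * (\<Sum>\<gamma>\<in>XB q n (B \<inter> B'). sigmaR [] \<gamma>)"
proof -
  have U: "\<forall>A\<in>B \<union> B'. A \<subseteq> {1..n}" and I: "\<forall>A\<in>B \<inter> B'. A \<subseteq> {1..n}" using B B' by auto
  have RS: "set (R @ S) \<subseteq> {1..n}" using R S by auto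
  let ?W = "\<lambda>B. real (card (XB q n B))"
  let ?m = "\<lambda>B R. mprod q n (rhoB q n B) R"
  have e1: "(\<Sum>\<gamma>\<in>XB q n B. sigmaR R \<gamma>) = ?W B * ?m B R" by (rule sum_XB[OF B R q])
  have e2: "(\<Sum>\<gamma>\<in>XB q n B'. sigmaR S \<gamma>) = ?W B' * ?m B' S" by (rule sum_XB[OF B' S q])
  have e3: "(\<Sum>\<gamma>\<in>XB q n (B \<union> B'). sigmaR (R @ S) \<gamma>) = ?W (B \<union> B') * ?m (B \<union> B') (R @ S)"
    by (rule sum_XB[OF U RS q])
  have e4: "(\<Sum>\<gamma>\<in>XB q n (B \<inter> B'). sigmaR [] \<gamma>) = ?W (B \<inter> B')" by (simp add: sigmaR_def)
  have w: "?W B * ?W B' \<le> ?W (B \<inter> B') * ?W (B \<union> B')" by (rule W_lattice[OF B B' q])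
  have m1: "?m B R \<le> ?m (B \<union> B') R" by (rule mprod_mono[OF _ R q]) auto
  have m2: "?m B' S \<le> ?m (B \<union> B') S" by (rule mprod_mono[OF _ S q]) auto
  have m3: "?m (B \<union> B') R * ?m (B \<union> B') S \<le> ?m (B \<union> B') (R @ S)" by (rule mprod_mult[OF q])
  have "?m B R * ?m B' S \<le> ?m (B \<union> B') R * ?m (B \<union> B') S"
    by (rule mult_mono[OF m1 m2]) (simp_all add: mprod_nonneg)
  also have "\<dots> \<le> ?m (B \<union> B') (R @ S)" by (rule m3)
  finally have m: "?m B R * ?m B' S \<le> ?m (B \<union> B') (R @ S)" .
  have "(?W B * ?W B') * (?m B R * ?m B' S) \<le> (?W (B \<inter> B') * ?W (B \<union> B')) * ?m (B \<union> B') (R @ S)"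
    by (rule mult_mono[OF w m]) (simp_all add: mprod_nonneg)
  thus ?thesis unfolding e1 e2 e3 e4 by (simp add: algebra_simps)
qed

theorem theorem2:
  fixes q n :: nat and J :: "nat set \<Rightarrow> real" and R S :: "nat list"
  assumes "2 \<le> q" and "1 \<le> n"
    and "\<And>A. A \<in> interactions n \<Longrightarrow> 0 \<le> J A"
    and "set R \<subseteq> {1..n}" and "set S \<subseteq> {1..n}"
  shows "expect q n J (\<lambda>\<gamma>. sigmaR R \<gamma> * sigmaR S \<gamma>)
           - expect q n J (sigmaR R) * expect q n J (sigmaR S) \<ge> 0"
proof -
  have q0: "0 < q" using assms(1) by simp
  define E where "E = {A \<in> interactions n. 0 < J A}"
  have finE: "finite E" unfolding E_def using finite_interactions by simp
  have EV: "\<And>B. B \<subseteq> E \<Longrightarrow> \<forall>A\<in>B. A \<subseteq> {1..n}" unfolding E_def interactions_def by auto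
  define p where "p A = exp (J A) - 1" for A
  define c where "c B = (\<Prod>A\<in>B. p A)" for B
  have p0: "0 \<le> p A" if "A \<in> E" for A using that unfolding p_def E_def by simp
  have c0: "0 \<le> c B" if "B \<subseteq> E" for B unfolding c_def using p0 that by (intro prod_nonneg) auto
  have Zexp: "Zg n J \<gamma> = (\<Sum>B\<in>Pow E. c B * (if \<forall>A\<in>B. delta A \<gamma> = 1 then 1 else 0))" for \<gamma>
  proof -
    have "Zg n J \<gamma> = exp (\<Sum>A\<in>interactions n. J A * delta A \<gamma>)"
      unfolding Zg_def Ham_def by simp
    also have "(\<Sum>A\<in>interactions n. J A * delta A \<gamma>) = (\<Sum>A\<in>E. J A * delta A \<gamma>)"
    proof (rule sum.mono_neutral_right[OF finite_interactions])
      show "E \<subseteq> interactions n" unfolding E_def by auto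
      show "\<forall>i\<in>interactions n - E. J i * delta i \<gamma> = 0"
        using assms(3) unfolding E_def by (auto simp: less_le)
    qed
    also have "exp (\<Sum>A\<in>E. J A * delta A \<gamma>) = (\<Prod>A\<in>E. exp (J A * delta A \<gamma>))"
      by (rule exp_sum[OF finE])
    also have "\<dots> = (\<Prod>A\<in>E. p A * delta A \<gamma> + 1)"
    proof (rule prod.cong[OF refl])
      fix A show "exp (J A * delta A \<gamma>) = p A * delta A \<gamma> + 1"
        using delta_01[of A \<gamma>] unfolding p_def by auto
    qed
    also have "\<dots> = (\<Sum>B\<in>Pow E. (\<Prod>A\<in>B. p A * delta A \<gamma>) * (\<Prod>A\<in>E - B. 1))"
      by (rule prod_add[OF finE])
    also have "\<dots> = (\<Sum>B\<in>Pow E. c B * (if \<forall>A\<in>B. delta A \<gamma> = 1 then 1 else 0))"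
    proof (rule sum.cong[OF refl])
      fix B assume "B \<in> Pow E"
      hence fB: "finite B" using finE finite_subset by blast
      show "(\<Prod>A\<in>B. p A * delta A \<gamma>) * (\<Prod>A\<in>E - B. 1) = c B * (if \<forall>A\<in>B. delta A \<gamma> = 1 then 1 else 0)"
        unfolding c_def prod.distrib prod_delta[OF fB] by simp
    qed
    finally show ?thesis .
  qed
  define N where "N h = (\<Sum>\<gamma>\<in>Omega q n. h \<gamma> * Zg n J \<gamma>)" for h :: "(nat \<Rightarrow> real) \<Rightarrow> real"
  have finO: "finite (Omega q n)" unfolding Omega_def by (intro finite_PiE) auto
  have Nform: "N h = (\<Sum>B\<in>Pow E. c B * (\<Sum>\<gamma>\<in>XB q n B. h \<gamma>))" for h
  proof -
    have "N h = (\<Sum>\<gamma>\<in>Omega q n. \<Sum>B\<in>Pow E. c B * (if \<forall>A\<in>B. delta A \<gamma> = 1 then h \<gamma> else 0))"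
      unfolding N_def Zexp sum_distrib_left by (intro sum.cong refl) auto
    also have "\<dots> = (\<Sum>B\<in>Pow E. \<Sum>\<gamma>\<in>Omega q n. c B * (if \<forall>A\<in>B. delta A \<gamma> = 1 then h \<gamma> else 0))"
      by (rule sum.swap)
    also have "\<dots> = (\<Sum>B\<in>Pow E. c B * (\<Sum>\<gamma>\<in>XB q n B. h \<gamma>))"
    proof (rule sum.cong[OF refl])
      fix B
      have "(\<Sum>\<gamma>\<in>XB q n B. h \<gamma>) = (\<Sum>\<gamma>\<in>Omega q n. if \<forall>A\<in>B. delta A \<gamma> = 1 then h \<gamma> else 0)"
        unfolding XB_def by (rule sum.inter_filter[OF finO])
      thus "(\<Sum>\<gamma>\<in>Omega q n. c B * (if \<forall>A\<in>B. delta A \<gamma> = 1 then h \<gamma> else 0)) = c B * (\<Sum>\<gamma>\<in>XB q n B. h \<gamma>)"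
        by (simp add: sum_distrib_left)
    qed
    finally show ?thesis .
  qed
  have one: "sigmaR [] = (\<lambda>_. 1)" unfolding sigmaR_def by auto
  have Zeq: "Zpart q n J = N (sigmaR [])" unfolding Zpart_def N_def one by simp
  have Zpos: "0 < Zpart q n J"
  proof -
    have "Fc q \<noteq> {}"
    proof
      assume "Fc q = {}" hence "card (Fc q) = 0" by simp
      thus False using q0 by simp
    qed
    hence "Omega q n \<noteq> {}" unfolding Omega_def by (simp add: PiE_eq_empty_iff)
    thus ?thesis unfolding Zpart_def Zg_def by (intro sum_pos finO) auto
  qed
  have expN: "expect q n J h = N h / Zpart q n J" for h
    unfolding expect_def Prob_def N_def by (simp add: sum_divide_distrib)
  have prodRS: "(\<lambda>\<gamma>. sigmaR R \<gamma> * sigmaR S \<gamma>) = sigmaR (R @ S)" unfolding sigmaR_def by auto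
  have key: "N (sigmaR R) * N (sigmaR S) \<le> N (sigmaR (R @ S)) * N (sigmaR [])"
    unfolding Nform
  proof (rule four_functions[OF finE])
    fix B assume B: "B \<subseteq> E"
    have RS: "set (R @ S) \<subseteq> {1..n}" using assms(4,5) by auto
    show "0 \<le> c B * sum (sigmaR R) (XB q n B) \<and> 0 \<le> c B * sum (sigmaR S) (XB q n B) \<and>
          0 \<le> c B * sum (sigmaR (R @ S)) (XB q n B) \<and> 0 \<le> c B * sum (sigmaR []) (XB q n B)"
      using c0[OF B] M_nonneg[OF EV[OF B] assms(4) q0] M_nonneg[OF EV[OF B] assms(5) q0]
        M_nonneg[OF EV[OF B] RS q0] M_nonneg[OF EV[OF B] _ q0, of "[]"] by simp
  next
    fix B B' assume B: "B \<subseteq> E" and B': "B' \<subseteq> E"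
    have fB: "finite B" "finite B'" using B B' finE finite_subset by blast+
    have cc: "c B * c B' = c (B \<union> B') * c (B \<inter> B')"
      unfolding c_def by (rule prod.union_inter[OF fB, symmetric])
    have k: "sum (sigmaR R) (XB q n B) * sum (sigmaR S) (XB q n B')
        \<le> sum (sigmaR (R @ S)) (XB q n (B \<union> B')) * sum (sigmaR []) (XB q n (B \<inter> B'))"
      by (rule M_key[OF EV[OF B] EV[OF B'] assms(4,5) q0])
    have "c B * sum (sigmaR R) (XB q n B) * (c B' * sum (sigmaR S) (XB q n B'))
        = (c B * c B') * (sum (sigmaR R) (XB q n B) * sum (sigmaR S) (XB q n B'))" by (simp add: algebra_simps)
    also have "\<dots> \<le> (c B * c B') * (sum (sigmaR (R @ S)) (XB q n (B \<union> B')) * sum (sigmaR []) (XB q n (B \<inter> B')))"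
      using c0[OF B] c0[OF B'] k by (intro mult_left_mono) auto
    also have "\<dots> = c (B \<union> B') * sum (sigmaR (R @ S)) (XB q n (B \<union> B')) * (c (B \<inter> B') * sum (sigmaR []) (XB q n (B \<inter> B')))"
      unfolding cc by (simp add: algebra_simps)
    finally show "c B * sum (sigmaR R) (XB q n B) * (c B' * sum (sigmaR S) (XB q n B'))
        \<le> c (B \<union> B') * sum (sigmaR (R @ S)) (XB q n (B \<union> B')) * (c (B \<inter> B') * sum (sigmaR []) (XB q n (B \<inter> B')))" .
  qed
  define Z where "Z = Zpart q n J"
  have "expect q n J (\<lambda>\<gamma>. sigmaR R \<gamma> * sigmaR S \<gamma>) - expect q n J (sigmaR R) * expect q n J (sigmaR S)
      = (N (sigmaR (R @ S)) * Z - N (sigmaR R) * N (sigmaR S)) / (Z * Z)"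
    unfolding expN prodRS Z_def[symmetric] using Zpos unfolding Z_def[symmetric]
    by (simp add: field_simps)
  also have "\<dots> \<ge> 0" using key Zpos unfolding Zeq[symmetric] Z_def[symmetric] by simp
  finally show ?thesis by simp
qed

end
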